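(* Let $\tilde L$ be a minimum-size counterexample. Then there are no elements $m,j\in\tilde L$ with $m$ meet-irreducible, $j$ join-irreducible, and $m<j$.
   Context: For a poset $P$, $x$ upper covers $y$ (and $y$ lower covers $x$) if $y<x$ with nothing strictly between. Join-irreducible: upper covers exactly one element; meet-irreducible: lower covers exactly one element. For $x\in P$, ${\uparrow}x=\{y: x\le y\}$. A counterexample is a finite lattice $L$ with $|L|>1$ in which every join-irreducible $j$ satisfies $|{\uparrow}j|>|L|/2$; a minimum-size counterexample is a counterexample $\tilde L$ such that no counterexample has fewer elements. *)

theory Defs
  imports "HOL-Algebra.Lattice"
begin

text \<open>Finite lattices are represented by HOL-Algebra's locale lattice on a record
  L of type 'a gorder (carrier, equality, order); the locale forces eq L = (=).\<close>

definition lt_in :: "'a gorder \<Rightarrow> 'a \<Rightarrow> 'a \<Rightarrow> bool" where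
  "lt_in L x y \<longleftrightarrow> le L x y \<and> x \<noteq> y"

definition upper_covers :: "'a gorder \<Rightarrow> 'a \<Rightarrow> 'a \<Rightarrow> bool" where
  "upper_covers L x y \<longleftrightarrow> x \<in> carrier L \<and> y \<in> carrier L \<and> lt_in L y x \<and>
     \<not> (\<exists>z\<in>carrier L. lt_in L y z \<and> lt_in L z x)"

definition join_irreducible :: "'a gorder \<Rightarrow> 'a \<Rightarrow> bool" where
  "join_irreducible L j \<longleftrightarrow> j \<in> carrier L \<and> card {y \<in> carrier L. upper_covers L j y} = 1"

definition meet_irreducible :: "'a gorder \<Rightarrow> 'a \<Rightarrow> bool" where
  "meet_irreducible L m \<longleftrightarrow> m \<in> carrier L \<and> card {x \<in> carrier L. upper_covers L x m} = 1"

definition up_set :: "'a gorder \<Rightarrow> 'a \<Rightarrow> 'a set" where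
  "up_set L x = {y \<in> carrier L. le L x y}"

definition counterexample :: "'a gorder \<Rightarrow> bool" where
  "counterexample L \<longleftrightarrow> lattice L \<and> finite (carrier L) \<and> card (carrier L) > 1 \<and>
     (\<forall>j. join_irreducible L j \<longrightarrow> 2 * card (up_set L j) > card (carrier L))"

text \<open>Every finite
  lattice is isomorphic to one carried by a subset of nat, so comparing against all
  counterexamples on nat quantifies over all finite lattices up to isomorphism.\<close>
definition min_counterexample :: "'a gorder \<Rightarrow> bool" where
  "min_counterexample L \<longleftrightarrow> counterexample L \<and>
     (\<forall>L' :: nat gorder. counterexample L' \<longrightarrow> card (carrier L) \<le> card (carrier L'))"

end

theory Submission
  imports Defs
begin

lemma pull_counterexample:
  fixes L :: "'a gorder" and f :: "'b \<Rightarrow> 'a"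
  assumes ce: "counterexample L" and inj: "inj_on f S" and im: "f ` S = carrier L"
  shows "counterexample \<lparr>carrier = S, eq = (=), le = \<lambda>a b. le L (f a) (f b)\<rparr>"
proof -
  define P where "P = (\<lparr>carrier = S, eq = (=), le = \<lambda>a b. le L (f a) (f b)\<rparr> :: 'b gorder)"
  have lat: "lattice L" and fin: "finite (carrier L)" and c1: "card (carrier L) > 1"
    and ji: "\<And>j. join_irreducible L j \<Longrightarrow> 2 * card (up_set L j) > card (carrier L)"
    using ce unfolding counterexample_def by auto
  interpret lattice L by (rule lat)
  have cP: "carrier P = S" and leP: "\<And>a b. le P a b = le L (f a) (f b)" and eqP: "eq P = (=)"
    by (simp_all add: P_def)
  have fS: "\<And>a. a \<in> S \<Longrightarrow> f a \<in> carrier L" using im by auto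
  have cardS: "card S = card (carrier L)" using card_image[OF inj] im by simp
  have finS: "finite S" using fin im inj finite_image_iff by metis
  have latP: "lattice P"
  proof -
    have po: "partial_order P"
    proof
      show "\<And>x. x \<in> carrier P \<Longrightarrow> x .=\<^bsub>P\<^esub> x" by (simp add: eqP)
      show "\<And>x y. x .=\<^bsub>P\<^esub> y \<Longrightarrow> x \<in> carrier P \<Longrightarrow> y \<in> carrier P \<Longrightarrow> y .=\<^bsub>P\<^esub> x" by (simp add: eqP)
      show "\<And>x y z. x .=\<^bsub>P\<^esub> y \<Longrightarrow> y .=\<^bsub>P\<^esub> z \<Longrightarrow> x \<in> carrier P \<Longrightarrow> y \<in> carrier P \<Longrightarrow> z \<in> carrier P \<Longrightarrow> x .=\<^bsub>P\<^esub> z" by (simp add: eqP)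
      show "\<And>x. x \<in> carrier P \<Longrightarrow> x \<sqsubseteq>\<^bsub>P\<^esub> x" using fS by (simp add: leP cP)
      show "\<And>x y. x \<sqsubseteq>\<^bsub>P\<^esub> y \<Longrightarrow> y \<sqsubseteq>\<^bsub>P\<^esub> x \<Longrightarrow> x \<in> carrier P \<Longrightarrow> y \<in> carrier P \<Longrightarrow> x .=\<^bsub>P\<^esub> y"
        using fS inj by (simp add: leP cP eqP inj_on_def) (metis le_antisym)
      show "\<And>x y z. x \<sqsubseteq>\<^bsub>P\<^esub> y \<Longrightarrow> y \<sqsubseteq>\<^bsub>P\<^esub> z \<Longrightarrow> x \<in> carrier P \<Longrightarrow> y \<in> carrier P \<Longrightarrow> z \<in> carrier P \<Longrightarrow> x \<sqsubseteq>\<^bsub>P\<^esub> z"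
        using fS by (auto simp add: leP cP intro: le_trans)
      show "\<And>x y z w. x .=\<^bsub>P\<^esub> y \<Longrightarrow> z .=\<^bsub>P\<^esub> w \<Longrightarrow> x \<in> carrier P \<Longrightarrow> y \<in> carrier P \<Longrightarrow> z \<in> carrier P \<Longrightarrow> w \<in> carrier P \<Longrightarrow> (x \<sqsubseteq>\<^bsub>P\<^esub> z) = (y \<sqsubseteq>\<^bsub>P\<^esub> w)"
        by (simp add: eqP)
      show "(.=\<^bsub>P\<^esub>) = (=)" by (simp add: eqP)
    qed
    show ?thesis
    proof (intro lattice.intro upper_semilattice.intro lower_semilattice.intro po
        upper_semilattice_axioms.intro lower_semilattice_axioms.intro)
      fix x y assume x: "x \<in> carrier P" and y: "y \<in> carrier P"
      hence fx: "f x \<in> carrier L" and fy: "f y \<in> carrier L" using fS cP by auto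
      obtain c where c: "c \<in> S" "f c = join L (f x) (f y)" using im fx fy join_closed
        by (metis imageE)
      show "\<exists>s. least P s (Upper P {x, y})"
      proof (intro exI[of _ c])
        show "least P c (Upper P {x, y})"
          unfolding least_def Upper_def using c x y fS fx fy
          by (auto simp add: cP leP join_left join_right join_le)
      qed
    next
      fix x y assume x: "x \<in> carrier P" and y: "y \<in> carrier P"
      hence fx: "f x \<in> carrier L" and fy: "f y \<in> carrier L" using fS cP by auto
      obtain c where c: "c \<in> S" "f c = meet L (f x) (f y)" using im fx fy meet_closed
        by (metis imageE)
      show "\<exists>s. greatest P s (Lower P {x, y})"
      proof (intro exI[of _ c])
        show "greatest P c (Lower P {x, y})"
          unfolding greatest_def Lower_def using c x y fS fx fy
          by (auto simp add: cP leP meet_left meet_right meet_le)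
      qed
    qed
  qed
  have ucP: "\<And>a b. upper_covers P a b \<longleftrightarrow> a \<in> S \<and> b \<in> S \<and> upper_covers L (f a) (f b)"
  proof -
    fix a b
    show "upper_covers P a b \<longleftrightarrow> a \<in> S \<and> b \<in> S \<and> upper_covers L (f a) (f b)"
    proof (cases "a \<in> S \<and> b \<in> S")
      case True
      have ne: "\<And>u v. u \<in> S \<Longrightarrow> v \<in> S \<Longrightarrow> (u \<noteq> v) = (f u \<noteq> f v)"
        using inj by (auto simp: inj_on_def)
      have "(\<exists>z\<in>S. lt_in P b z \<and> lt_in P z a) \<longleftrightarrow> (\<exists>z\<in>carrier L. lt_in L (f b) z \<and> lt_in L z (f a))"
        unfolding lt_in_def using True ne im by (auto simp: leP) (metis imageE)
      thus ?thesis using True ne fS unfolding upper_covers_def lt_in_def by (auto simp: leP cP)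
    next
      case False thus ?thesis by (auto simp: upper_covers_def cP)
    qed
  qed
  have jiP: "\<And>a. join_irreducible P a \<Longrightarrow> join_irreducible L (f a)"
  proof -
    fix a assume "join_irreducible P a"
    hence a: "a \<in> S" and c: "card {y \<in> S. upper_covers P a y} = 1"
      unfolding join_irreducible_def by (auto simp: cP)
    have "f ` {y \<in> S. upper_covers P a y} = {y \<in> carrier L. upper_covers L (f a) y}"
    proof
      show "f ` {y \<in> S. upper_covers P a y} \<subseteq> {y \<in> carrier L. upper_covers L (f a) y}"
        using fS by (auto simp: ucP)
      show "{y \<in> carrier L. upper_covers L (f a) y} \<subseteq> f ` {y \<in> S. upper_covers P a y}"
      proof
        fix y assume y: "y \<in> {y \<in> carrier L. upper_covers L (f a) y}"
        then obtain z where z: "z \<in> S" "y = f z" using im by auto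
        thus "y \<in> f ` {y \<in> S. upper_covers P a y}" using a y by (auto simp: ucP)
      qed
    qed
    moreover have "inj_on f {y \<in> S. upper_covers P a y}" using inj by (rule inj_on_subset) auto
    ultimately have "card {y \<in> carrier L. upper_covers L (f a) y} = 1" using c card_image by metis
    thus "join_irreducible L (f a)" using a fS unfolding join_irreducible_def by auto
  qed
  have upP: "\<And>a. a \<in> S \<Longrightarrow> card (up_set P a) = card (up_set L (f a))"
  proof -
    fix a assume a: "a \<in> S"
    have "f ` up_set P a = up_set L (f a)"
      using a im by (auto simp: up_set_def cP leP)
    moreover have "inj_on f (up_set P a)" using inj by (rule inj_on_subset) (auto simp: up_set_def cP)
    ultimately show "card (up_set P a) = card (up_set L (f a))" using card_image by metis
  qed
  have "counterexample P"
    unfolding counterexample_def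
  proof (intro conjI allI impI latP)
    show "finite (carrier P)" using finS cP by simp
    show "1 < card (carrier P)" using cardS c1 cP by simp
    fix j assume j: "join_irreducible P j"
    hence "j \<in> S" by (simp add: join_irreducible_def cP)
    thus "card (carrier P) < 2 * card (up_set P j)"
      using ji[OF jiP[OF j]] upP cardS cP by simp
  qed
  thus ?thesis by (simp add: P_def)
qed


lemma cover_below:
  assumes lat: "lattice L" and fin: "finite (carrier L)" and m: "m \<in> carrier L"
    and u: "u \<in> carrier L" and mu: "lt_in L m u"
  shows "\<exists>z. upper_covers L z m \<and> le L z u"
proof -
  interpret lattice L by (rule lat)
  define T where "T = {z \<in> carrier L. lt_in L m z \<and> le L z u}"
  define dn where "dn = (\<lambda>z. card {w \<in> carrier L. le L w z})"
  have "u \<in> T" using u mu by (simp add: T_def)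
  then obtain z where zT: "z \<in> T" and zmin: "\<And>y. y \<in> T \<Longrightarrow> dn z \<le> dn y"
    using ex_has_least_nat[of "\<lambda>z. z \<in> T" u dn] by blast
  have zc: "z \<in> carrier L" "lt_in L m z" "le L z u" using zT by (auto simp: T_def)
  have "upper_covers L z m"
    unfolding upper_covers_def
  proof (intro conjI zc m notI)
    assume "\<exists>y\<in>carrier L. lt_in L m y \<and> lt_in L y z"
    then obtain y where y: "y \<in> carrier L" "lt_in L m y" "lt_in L y z" by blast
    have "y \<in> T" using y zc u unfolding T_def lt_in_def by (auto intro: le_trans)
    hence le1: "dn z \<le> dn y" by (rule zmin)
    have sub: "{w \<in> carrier L. le L w y} \<subset> {w \<in> carrier L. le L w z}"
    proof
      show "{w \<in> carrier L. le L w y} \<subseteq> {w \<in> carrier L. le L w z}"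
        using y zc by (auto simp: lt_in_def intro: le_trans)
      have "z \<notin> {w \<in> carrier L. le L w y}" using y zc by (auto simp: lt_in_def dest: le_antisym)
      moreover have "z \<in> {w \<in> carrier L. le L w z}" using zc by simp
      ultimately show "{w \<in> carrier L. le L w y} \<noteq> {w \<in> carrier L. le L w z}" by blast
    qed
    have "dn y < dn z" unfolding dn_def by (rule psubset_card_mono) (use fin sub in auto)
    with le1 show False by simp
  qed
  thus ?thesis using zc by blast
qed

lemma mi_above:
  assumes lat: "lattice L" and fin: "finite (carrier L)" and mi: "meet_irreducible L m"
    and ms: "upper_covers L ms m" and u: "u \<in> carrier L" and mu: "lt_in L m u"
  shows "le L ms u"
proof -
  have m: "m \<in> carrier L" using mi by (simp add: meet_irreducible_def)
  obtain z where z: "upper_covers L z m" "le L z u" using cover_below[OF lat fin m u mu] by blast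
  have c: "card {x \<in> carrier L. upper_covers L x m} = 1" using mi by (simp add: meet_irreducible_def)
  have "z \<in> {x \<in> carrier L. upper_covers L x m}" "ms \<in> {x \<in> carrier L. upper_covers L x m}"
    using z ms by (auto simp: upper_covers_def)
  hence "z = ms" using c by (metis card_1_singletonE singletonD)
  thus ?thesis using z by simp
qed

lemma delete_lattice:
  assumes lat: "lattice L" and fin: "finite (carrier L)" and mi: "meet_irreducible L m"
    and ms: "upper_covers L ms m"
  shows "lattice (L\<lparr>carrier := carrier L - {m}\<rparr>)"
proof -
  interpret lattice L by (rule lat)
  define P where "P = L\<lparr>carrier := carrier L - {m}\<rparr>"
  have cP: "carrier P = carrier L - {m}" and leP: "le P = le L" and eqP: "eq P = (=)"
    by (simp_all add: P_def eq_is_equal)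
  have m: "m \<in> carrier L" using mi by (simp add: meet_irreducible_def)
  have msc: "ms \<in> carrier L" "le L m ms" "ms \<noteq> m" using ms by (auto simp: upper_covers_def lt_in_def)
  have above: "\<And>u. u \<in> carrier L \<Longrightarrow> le L m u \<Longrightarrow> u \<noteq> m \<Longrightarrow> le L ms u"
    using mi_above[OF lat fin mi ms] by (simp add: lt_in_def)
  have po: "partial_order P"
  proof
    show "\<And>x. x \<in> carrier P \<Longrightarrow> x .=\<^bsub>P\<^esub> x" by (simp add: eqP)
    show "\<And>x y. x .=\<^bsub>P\<^esub> y \<Longrightarrow> x \<in> carrier P \<Longrightarrow> y \<in> carrier P \<Longrightarrow> y .=\<^bsub>P\<^esub> x" by (simp add: eqP)
    show "\<And>x y z. x .=\<^bsub>P\<^esub> y \<Longrightarrow> y .=\<^bsub>P\<^esub> z \<Longrightarrow> x \<in> carrier P \<Longrightarrow> y \<in> carrier P \<Longrightarrow> z \<in> carrier P \<Longrightarrow> x .=\<^bsub>P\<^esub> z" by (simp add: eqP)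
    show "\<And>x. x \<in> carrier P \<Longrightarrow> x \<sqsubseteq>\<^bsub>P\<^esub> x" by (simp add: leP cP)
    show "\<And>x y. x \<sqsubseteq>\<^bsub>P\<^esub> y \<Longrightarrow> y \<sqsubseteq>\<^bsub>P\<^esub> x \<Longrightarrow> x \<in> carrier P \<Longrightarrow> y \<in> carrier P \<Longrightarrow> x .=\<^bsub>P\<^esub> y"
      by (simp add: leP cP eqP) (metis le_antisym)
    show "\<And>x y z. x \<sqsubseteq>\<^bsub>P\<^esub> y \<Longrightarrow> y \<sqsubseteq>\<^bsub>P\<^esub> z \<Longrightarrow> x \<in> carrier P \<Longrightarrow> y \<in> carrier P \<Longrightarrow> z \<in> carrier P \<Longrightarrow> x \<sqsubseteq>\<^bsub>P\<^esub> z"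
      by (auto simp add: leP cP intro: le_trans)
    show "\<And>x y z w. x .=\<^bsub>P\<^esub> y \<Longrightarrow> z .=\<^bsub>P\<^esub> w \<Longrightarrow> x \<in> carrier P \<Longrightarrow> y \<in> carrier P \<Longrightarrow> z \<in> carrier P \<Longrightarrow> w \<in> carrier P \<Longrightarrow> (x \<sqsubseteq>\<^bsub>P\<^esub> z) = (y \<sqsubseteq>\<^bsub>P\<^esub> w)"
      by (simp add: eqP)
    show "(.=\<^bsub>P\<^esub>) = (=)" by (simp add: eqP)
  qed
  have "lattice P"
  proof (intro lattice.intro upper_semilattice.intro lower_semilattice.intro po
      upper_semilattice_axioms.intro lower_semilattice_axioms.intro)
    fix x y assume x: "x \<in> carrier P" and y: "y \<in> carrier P"
    hence xc: "x \<in> carrier L" "x \<noteq> m" and yc: "y \<in> carrier L" "y \<noteq> m" by (auto simp: cP)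
    show "\<exists>s. least P s (Upper P {x, y})"
    proof (cases "join L x y = m")
      case False
      show ?thesis
      proof (intro exI[of _ "join L x y"])
        show "least P (join L x y) (Upper P {x, y})"
          unfolding least_def Upper_def using False xc yc
          by (auto simp add: cP leP join_left join_right join_le)
      qed
    next
      case True
      have jl: "le L x m" "le L y m" using True xc yc join_left join_right by metis+
      show ?thesis
      proof (intro exI[of _ ms])
        have ub: "ms \<in> Upper P {x, y}"
          unfolding Upper_def using xc yc msc jl m by (auto simp add: cP leP intro: le_trans)
        have lb: "\<forall>u\<in>Upper P {x, y}. le L ms u"
        proof
          fix u assume "u \<in> Upper P {x, y}"
          hence u: "u \<in> carrier L" "u \<noteq> m" "le L x u" "le L y u"
            unfolding Upper_def using xc yc by (auto simp: cP leP)
          have "le L m u" using True join_le[OF u(3) u(4) xc(1) yc(1) u(1)] by simp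
          thus "le L ms u" using above u by blast
        qed
        show "least P ms (Upper P {x, y})"
          unfolding least_def using ub lb by (auto simp: leP Upper_def)
      qed
    qed
  next
    fix x y assume x: "x \<in> carrier P" and y: "y \<in> carrier P"
    hence xc: "x \<in> carrier L" "x \<noteq> m" and yc: "y \<in> carrier L" "y \<noteq> m" by (auto simp: cP)
    have nm: "meet L x y \<noteq> m"
    proof
      assume e: "meet L x y = m"
      have "le L m x" "le L m y" using e xc yc meet_left meet_right by metis+
      hence "le L ms x" "le L ms y" using above xc yc by blast+
      hence "le L ms (meet L x y)" using meet_le xc yc msc by blast
      hence "ms = m" using e msc m le_antisym by simp
      thus False using msc by simp
    qed
    show "\<exists>s. greatest P s (Lower P {x, y})"
    proof (intro exI[of _ "meet L x y"])
      show "greatest P (meet L x y) (Lower P {x, y})"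
        unfolding greatest_def Lower_def using nm xc yc
        by (auto simp add: cP leP meet_left meet_right meet_le)
    qed
  qed
  thus ?thesis by (simp add: P_def)
qed


theorem theorem2p3:
  fixes L :: "'a gorder"
  assumes "min_counterexample L"
  shows "\<not> (\<exists>m\<in>carrier L. \<exists>j\<in>carrier L.
            meet_irreducible L m \<and> join_irreducible L j \<and> lt_in L m j)"
proof
  assume "\<exists>m\<in>carrier L. \<exists>j\<in>carrier L. meet_irreducible L m \<and> join_irreducible L j \<and> lt_in L m j"
  then obtain m j where m: "m \<in> carrier L" and j: "j \<in> carrier L" and mi: "meet_irreducible L m"
    and ji: "join_irreducible L j" and mj: "lt_in L m j" by blast
  have ce: "counterexample L" and mn: "\<And>L' :: nat gorder. counterexample L' \<Longrightarrow> card (carrier L) \<le> card (carrier L')"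
    using assms unfolding min_counterexample_def by auto
  have lat: "lattice L" and fin: "finite (carrier L)" and c1: "card (carrier L) > 1"
    and jib: "\<And>k. join_irreducible L k \<Longrightarrow> 2 * card (up_set L k) > card (carrier L)"
    using ce unfolding counterexample_def by auto
  interpret lattice L by (rule lat)
  define n where "n = card (carrier L)"
  have "card {x \<in> carrier L. upper_covers L x m} = 1" using mi by (simp add: meet_irreducible_def)
  then obtain ms where ms: "upper_covers L ms m" by (metis (no_types, lifting) card_1_singletonE mem_Collect_eq singletonI)
  have msc: "ms \<in> carrier L" "le L m ms" "ms \<noteq> m" using ms by (auto simp: upper_covers_def lt_in_def)
  have msj: "le L ms j" using mi_above[OF lat fin mi ms j mj] .
  have mjc: "le L m j" "m \<noteq> j" using mj by (auto simp: lt_in_def)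
  define A where "A = carrier L - {m}"
  define L' where "L' = L\<lparr>carrier := A\<rparr>"
  have cL': "carrier L' = A" and leL': "le L' = le L" by (simp_all add: L'_def)
  have finA: "finite A" using fin by (simp add: A_def)
  have cardA: "card A = n - 1" using m fin by (simp add: A_def n_def)
  have upj_sub: "up_set L j \<subseteq> A"
    using m j mjc unfolding up_set_def A_def by (auto dest: le_antisym)
  have upjb: "2 * card (up_set L j) > n" using jib[OF ji] by (simp add: n_def)
  have "card (up_set L j) \<le> n - 1" using card_mono[OF finA upj_sub] cardA by simp
  hence n3: "n \<ge> 3" using upjb by linarith
  have upL': "\<And>k. up_set L' k = up_set L k - {m}"
    by (auto simp: up_set_def cL' leL' A_def)
  have finup: "\<And>k. finite (up_set L k)" using fin by (simp add: up_set_def)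
  have ucL': "\<And>k. k \<in> A \<Longrightarrow> k \<noteq> ms \<Longrightarrow> {y \<in> A. upper_covers L' k y} = {y \<in> carrier L. upper_covers L k y}"
  proof -
    fix k assume kA: "k \<in> A" and kms: "k \<noteq> ms"
    have c: "card {x \<in> carrier L. upper_covers L x m} = 1" using mi by (simp add: meet_irreducible_def)
    have msin: "ms \<in> {x \<in> carrier L. upper_covers L x m}" using ms msc by simp
    show "{y \<in> A. upper_covers L' k y} = {y \<in> carrier L. upper_covers L k y}"
    proof (rule equalityI; rule subsetI)
      fix y assume "y \<in> {y \<in> A. upper_covers L' k y}"
      hence y: "y \<in> A" "k \<in> A" "lt_in L y k" "\<not> (\<exists>z\<in>A. lt_in L y z \<and> lt_in L z k)"
        by (auto simp: upper_covers_def cL' lt_in_def leL')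
      have "\<not> (\<exists>z\<in>carrier L. lt_in L y z \<and> lt_in L z k)"
      proof
        assume "\<exists>z\<in>carrier L. lt_in L y z \<and> lt_in L z k"
        then obtain z where z: "z \<in> carrier L" "lt_in L y z" "lt_in L z k" by blast
        have "z = m" using z y by (auto simp: A_def)
        hence "le L ms k" using mi_above[OF lat fin mi ms] z kA by (auto simp: A_def)
        moreover have "lt_in L y ms" using z \<open>z = m\<close> msc y
          unfolding lt_in_def A_def by (auto intro: le_trans dest: le_antisym)
        ultimately show False using y kms msc unfolding A_def lt_in_def by auto
      qed
      thus "y \<in> {y \<in> carrier L. upper_covers L k y}" using y by (auto simp: upper_covers_def A_def)
    next
      fix y assume "y \<in> {y \<in> carrier L. upper_covers L k y}"
      hence y: "y \<in> carrier L" "upper_covers L k y" by auto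
      have "y \<noteq> m"
      proof
        assume "y = m"
        hence "k \<in> {x \<in> carrier L. upper_covers L x m}" using y by (auto simp: upper_covers_def)
        hence "k = ms" using c msin by (metis card_1_singletonE singletonD)
        thus False using kms by simp
      qed
      thus "y \<in> {y \<in> A. upper_covers L' k y}" using y kA
        by (auto simp: upper_covers_def A_def cL' leL' lt_in_def)
    qed
  qed
  have ceL': "counterexample L'"
    unfolding counterexample_def
  proof (intro conjI allI impI)
    show "lattice L'" unfolding L'_def A_def by (rule delete_lattice[OF lat fin mi ms])
    show "finite (carrier L')" using finA cL' by simp
    show "1 < card (carrier L')" using cL' cardA n3 by simp
    fix k assume kji: "join_irreducible L' k"
    hence kA: "k \<in> A" and kc: "card {y \<in> A. upper_covers L' k y} = 1"
      by (auto simp: join_irreducible_def cL')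
    show "card (carrier L') < 2 * card (up_set L' k)"
    proof (cases "k = ms")
      case True
      have "m \<notin> up_set L ms" using msc m by (auto simp: up_set_def dest: le_antisym)
      hence "up_set L' k = up_set L ms" using True upL' by auto
      moreover have "up_set L j \<subseteq> up_set L ms" using msj msc j by (auto simp: up_set_def intro: le_trans)
      ultimately have "card (up_set L j) \<le> card (up_set L' k)" using finup card_mono by metis
      thus ?thesis using upjb cL' cardA by simp
    next
      case False
      have kjiL: "join_irreducible L k" using kA kc ucL'[OF kA False]
        by (simp add: join_irreducible_def A_def)
      have kb: "2 * card (up_set L k) > n" using jib[OF kjiL] by (simp add: n_def)
      show ?thesis
      proof (cases "m \<in> up_set L k")
        case False
        thus ?thesis using kb upL' cL' cardA by simp
      next
        case True
        have kc': "k \<in> carrier L" "k \<noteq> m" "le L k m" using kA True by (auto simp: A_def up_set_def)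
        have "k \<notin> up_set L j"
        proof
          assume "k \<in> up_set L j"
          hence "le L j k" by (simp add: up_set_def)
          hence "le L j m" using kc' j m le_trans by blast
          thus False using mjc m j le_antisym by blast
        qed
        moreover have "m \<notin> up_set L j" using upj_sub by (auto simp: A_def)
        moreover have "up_set L j \<subseteq> up_set L k" using kc' mjc m j
          by (auto simp: up_set_def intro: le_trans)
        moreover have "k \<in> up_set L k" "m \<in> up_set L k" using kc' True by (auto simp: up_set_def)
        ultimately have "insert k (insert m (up_set L j)) \<subseteq> up_set L k" by auto
        hence "card (insert k (insert m (up_set L j))) \<le> card (up_set L k)"
          using finup card_mono by metis
        moreover have "card (insert k (insert m (up_set L j))) = card (up_set L j) + 2"
          using \<open>k \<notin> up_set L j\<close> \<open>m \<notin> up_set L j\<close> kc' finup by simp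
        ultimately have "card (up_set L k) \<ge> card (up_set L j) + 2" by simp
        moreover have "card (up_set L' k) = card (up_set L k) - 1" using upL' True finup by simp
        ultimately show ?thesis using upjb cL' cardA by simp
      qed
    qed
  qed
  obtain kk :: nat and f where f: "A = f ` {i. i < kk}" "inj_on f {i. i < kk}"
    using finite_imp_nat_seg_image_inj_on[OF finA] by blast
  have "counterexample \<lparr>carrier = {i. i < kk}, eq = (=), le = \<lambda>a b. le L' (f a) (f b)\<rparr>"
    using pull_counterexample[OF ceL' f(2)] f(1) cL' by simp
  hence "n \<le> kk" using mn n_def by fastforce
  moreover have "kk = card A" using f card_image by fastforce
  ultimately show False using cardA n3 by simp
qed

end
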